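(* Let $G=(V,E)$ be a graph and let $\hat{\mathcal{C}}$ be one of the sets $\widehat{\mathrm{TH}}(G):=\{\hat X\in\mathbb{S}^{\{0\}\cup V}_+ : \hat X_{00}=1,\ \hat X_{ii}=\hat X_{0i}\ \forall i\in V,\ \hat X_{ij}=0\ \forall ij\in E\}$, $\widehat{\mathrm{TH}}'(G):=\{\hat X\in\widehat{\mathrm{TH}}(G) : \hat X_{ij}\ge 0\ \forall ij\in\binom{V}{2}\setminus E\}$, or $\widehat{\mathrm{TH}}^+(G):=\{\hat X\in\mathbb{S}^{\{0\}\cup V}_+ : \hat X_{00}=1,\ \hat X_{ii}=\hat X_{0i}\ \forall i\in V,\ \hat X_{ij}\le 0\ \forall ij\in E\}$. Then a point $\hat X$ of $\hat{\mathcal{C}}$ is a vertex of $\hat{\mathcal{C}}$ if and only if $\operatorname{rank}(\hat X)=1$. Thus the vertices of $\hat{\mathcal{C}}$ are precisely the matrices $(1\oplus\chi^S)(1\oplus\chi^S)^{\mathsf T}$ where $S\subseteq V$ is a stable set of $G$.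
   Context: $0$ is a new index not in $V$; $\mathbb{S}^{W}_+$ denotes real symmetric positive semidefinite matrices indexed by $W$, with trace inner product. $\chi^S\in\{0,1\}^V$ is the incidence vector of $S$, and $1\oplus\chi^S\in\mathbb{R}^{\{0\}\cup V}$ has $0$-entry $1$. For a convex set $\mathcal{C}$ in a finite-dimensional space $\mathbb{E}$ and $\bar x\in\mathcal{C}$, the normal cone is $N_{\mathcal{C}}(\bar x):=\{c : \langle c,x\rangle\le\langle c,\bar x\rangle\ \forall x\in\mathcal{C}\}$; $\bar x$ is a vertex if $\dim N_{\mathcal{C}}(\bar x)=\dim\mathbb{E}$. *)

theory Defs
  imports "HOL-Analysis.Analysis"
begin

text \<open>Matrices indexed by \<open>{0} \<union> V\<close>: the index type is \<open>'v option\<close>,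
  where \<open>None\<close> plays the role of the new index 0 and \<open>Some i\<close> the vertex \<open>i \<in> V\<close>
  (V = UNIV :: 'v set, a finite type). The inner product on \<open>real^'w^'w\<close> is
  \<open>A \<bullet> B = \<Sum>i j. A_ij B_ij = trace(A^T B)\<close>.\<close>

definition sym_mats :: "(real^'w^'w) set" where
  "sym_mats = {A. transpose A = A}"

definition psd :: "real^'w^'w \<Rightarrow> bool" where
  "psd A \<longleftrightarrow> transpose A = A \<and> (\<forall>x. 0 \<le> x \<bullet> (A *v x))"

definition TH_hat :: "('v::finite \<times> 'v) set \<Rightarrow> (real^('v option)^('v option)) set" where
  "TH_hat E = {X. psd X \<and> X $ None $ None = 1 \<and>
      (\<forall>i. X $ Some i $ Some i = X $ None $ Some i) \<and>
      (\<forall>i j. (i, j) \<in> E \<longrightarrow> X $ Some i $ Some j = 0)}"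

definition TH_hat' :: "('v::finite \<times> 'v) set \<Rightarrow> (real^('v option)^('v option)) set" where
  "TH_hat' E = {X \<in> TH_hat E.
      \<forall>i j. i \<noteq> j \<and> (i, j) \<notin> E \<longrightarrow> 0 \<le> X $ Some i $ Some j}"

definition TH_hat_plus :: "('v::finite \<times> 'v) set \<Rightarrow> (real^('v option)^('v option)) set" where
  "TH_hat_plus E = {X. psd X \<and> X $ None $ None = 1 \<and>
      (\<forall>i. X $ Some i $ Some i = X $ None $ Some i) \<and>
      (\<forall>i j. (i, j) \<in> E \<longrightarrow> X $ Some i $ Some j \<le> 0)}"

definition normal_cone :: "(real^'w^'w) set \<Rightarrow> real^'w^'w \<Rightarrow> (real^'w^'w) set" where
  "normal_cone C x = {c \<in> sym_mats. \<forall>y\<in>C. c \<bullet> y \<le> c \<bullet> x}"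

definition is_vertex :: "(real^'w^'w) set \<Rightarrow> real^'w^'w \<Rightarrow> bool" where
  "is_vertex C x \<longleftrightarrow> x \<in> C \<and> dim (normal_cone C x) = dim (sym_mats :: (real^'w^'w) set)"

definition one_chi :: "'v::finite set \<Rightarrow> real^('v option)" where
  "one_chi S = (\<chi> i. case i of None \<Rightarrow> 1 | Some v \<Rightarrow> (if v \<in> S then 1 else 0))"

definition outer :: "real^'w \<Rightarrow> real^'w^'w" where
  "outer u = (\<chi> i j. u $ i * u $ j)"

definition stable_set :: "('v \<times> 'v) set \<Rightarrow> 'v set \<Rightarrow> bool" where
  "stable_set E S \<longleftrightarrow> (\<forall>i\<in>S. \<forall>j\<in>S. (i, j) \<notin> E)"

end

theory Submission
  imports Defs
begin

lemma sum_opt: "(\<Sum>a\<in>UNIV. f a) = f None + (\<Sum>i\<in>UNIV. f (Some i))"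
  for f :: "'v::finite option \<Rightarrow> 'b::comm_monoid_add"
proof -
  have "sum f (insert None (range Some)) = f None + (\<Sum>i\<in>UNIV. f (Some i))"
    by (simp add: sum.reindex)
  then show ?thesis by (metis UNIV_option_conv)
qed

lemma inner_mat: "(A::real^'w^'w) \<bullet> B = (\<Sum>a\<in>UNIV. \<Sum>b\<in>UNIV. A$a$b * B$a$b)"
  by (simp add: inner_vec_def)

lemma bil: "(z::real^'w) \<bullet> ((X::real^'w^'w) *v y) = (\<Sum>a\<in>UNIV. \<Sum>b\<in>UNIV. z$a * X$a$b * y$b)"
  by (simp add: inner_vec_def matrix_vector_mult_def sum_distrib_left mult.assoc)

lemma symD: "transpose X = X \<Longrightarrow> X$a$b = X$b$a"
  by (metis transpose_def vec_lambda_beta)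

lemma bil_sym: assumes "transpose X = X"
  shows "(z::real^'w) \<bullet> ((X::real^'w^'w) *v y) = y \<bullet> (X *v z)"
proof -
  have "(\<Sum>a\<in>UNIV. \<Sum>b\<in>UNIV. z$a * X$a$b * y$b) = (\<Sum>b\<in>UNIV. \<Sum>a\<in>UNIV. z$a * X$a$b * y$b)"
    by (rule sum.swap)
  also have "\<dots> = (\<Sum>b\<in>UNIV. \<Sum>a\<in>UNIV. y$b * X$b$a * z$a)"
    using symD[OF assms] by (simp add: ac_simps)
  finally show ?thesis by (simp add: bil)
qed

lemma psd_cs:
  fixes X :: "real^'w^'w"
  assumes "psd X"
  shows "(z \<bullet> (X *v y))\<^sup>2 \<le> (z \<bullet> (X *v z)) * (y \<bullet> (X *v y))"
proof -
  define b where "b = z \<bullet> (X *v y)"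
  define p where "p = z \<bullet> (X *v z)"
  define q where "q = y \<bullet> (X *v y)"
  have sy: "transpose X = X" using assms by (simp add: psd_def)
  have yz: "y \<bullet> (X *v z) = b" unfolding b_def using bil_sym[OF sy] by simp
  have quad: "0 \<le> p + 2*t*b + t\<^sup>2 * q" for t
  proof -
    have "0 \<le> (z + t *\<^sub>R y) \<bullet> (X *v (z + t *\<^sub>R y))"
      using assms by (simp add: psd_def)
    also have "\<dots> = p + 2*t*b + t\<^sup>2 * q"
      by (simp add: algebra_simps inner_add_left inner_add_right p_def q_def b_def[symmetric] yz power2_eq_square)
    finally show ?thesis .
  qed
  have q0: "0 \<le> q" using assms by (simp add: psd_def q_def)
  show ?thesis
  proof (cases "q = 0")
    case True
    have "b = 0"
    proof (rule ccontr)
      assume "b \<noteq> 0"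
      have "0 \<le> p + 2*(-(p+1)/(2*b))*b + (-(p+1)/(2*b))\<^sup>2 * q" by (rule quad)
      with True \<open>b \<noteq> 0\<close> show False by (simp add: field_simps)
    qed
    then show ?thesis using True by (simp add: b_def[symmetric] p_def[symmetric] q_def[symmetric])
  next
    case False
    then have qp: "q > 0" using q0 by simp
    have "0 \<le> p + 2*(-b/q)*b + (-b/q)\<^sup>2 * q" by (rule quad)
    also have "\<dots> = p - b\<^sup>2/q" using qp by (simp add: field_simps power2_eq_square)
    finally have "b\<^sup>2 / q \<le> p" by simp
    then have "b\<^sup>2 \<le> p * q" using qp by (simp add: divide_le_eq)
    then show ?thesis by (simp add: b_def[symmetric] p_def[symmetric] q_def[symmetric])
  qed
qed

lemma bil_split:
  fixes X :: "real^('v::finite option)^('v option)"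
  shows "z \<bullet> (X *v y) = z$None * X$None$None * y$None + (\<Sum>j\<in>UNIV. z$None * X$None$Some j * y$Some j)
     + (\<Sum>i\<in>UNIV. z$Some i * X$Some i$None * y$None) + (\<Sum>i\<in>UNIV. \<Sum>j\<in>UNIV. z$Some i * X$Some i$Some j * y$Some j)"
  by (simp add: bil sum_opt sum.distrib)

lemma inner_split:
  fixes A :: "real^('v::finite option)^('v option)"
  shows "A \<bullet> B = A$None$None * B$None$None + (\<Sum>j\<in>UNIV. A$None$Some j * B$None$Some j)
     + (\<Sum>i\<in>UNIV. A$Some i$None * B$Some i$None) + (\<Sum>i\<in>UNIV. \<Sum>j\<in>UNIV. A$Some i$Some j * B$Some i$Some j)"
  by (simp add: inner_mat sum_opt sum.distrib)

type_synonym 'v M = "real^('v option)^('v option)"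

definition xv :: "'v::finite M \<Rightarrow> 'v \<Rightarrow> real" where "xv X i = X$None$Some i"

definition Lf :: "'v::finite M \<Rightarrow> ('v \<Rightarrow> real) \<Rightarrow> real^('v option)" where
  "Lf X w = (\<chi> a. case a of None \<Rightarrow> -(\<Sum>i\<in>UNIV. xv X i * w i) | Some i \<Rightarrow> w i)"

definition BB :: "'v::finite M \<Rightarrow> ('v \<Rightarrow> real) \<Rightarrow> ('v \<Rightarrow> real) \<Rightarrow> real" where
  "BB X w v = (\<Sum>i\<in>UNIV. \<Sum>j\<in>UNIV. w i * X$Some i$Some j * v j) - (\<Sum>i\<in>UNIV. xv X i * w i) * (\<Sum>j\<in>UNIV. xv X j * v j)"

definition ek :: "'v \<Rightarrow> 'v \<Rightarrow> real" where "ek k = (\<lambda>j. if j = k then 1 else 0)"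

definition base :: "'v::finite M \<Rightarrow> bool" where
  "base Y \<longleftrightarrow> psd Y \<and> Y$None$None = 1 \<and> (\<forall>i. Y$Some i$Some i = Y$None$Some i)"

lemma Lf_bil:
  assumes "transpose X = X" "X$None$None = 1"
  shows "Lf X w \<bullet> (X *v Lf X v) = BB X w v"
proof -
  have s: "X$Some i$None = xv X i" for i using symD[OF assms(1)] by (simp add: xv_def)
  define a where "a = (\<Sum>i\<in>UNIV. xv X i * w i)"
  define b where "b = (\<Sum>i\<in>UNIV. xv X i * v i)"
  have n1: "Lf X w $ None = -a" "Lf X v $ None = -b" by (simp_all add: Lf_def a_def b_def)
  have n2: "Lf X w $ Some i = w i" "Lf X v $ Some i = v i" for i by (simp_all add: Lf_def)
  have t2: "(\<Sum>j\<in>UNIV. (-a) * X$None$Some j * v j) = -a*b"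
    by (simp add: b_def sum_distrib_left xv_def mult.assoc flip: sum_negf)
  have t3: "(\<Sum>i\<in>UNIV. w i * X$Some i$None * (-b)) = -a*b"
    by (simp add: a_def sum_distrib_left s mult_ac flip: sum_negf)
  show ?thesis
    unfolding bil_split n1 n2 t2 t3 assms(2) BB_def a_def[symmetric] b_def[symmetric]
    by (simp add: mult_ac)
qed

lemma BB_cs:
  assumes "base X"
  shows "(BB X w v)\<^sup>2 \<le> BB X w w * BB X v v" "0 \<le> BB X w w"
proof -
  have p: "psd X" "transpose X = X" "X$None$None = 1" using assms by (auto simp: base_def psd_def)
  show "(BB X w v)\<^sup>2 \<le> BB X w w * BB X v v"
    using psd_cs[OF p(1), of "Lf X w" "Lf X v"] by (simp add: Lf_bil[OF p(2,3)])
  show "0 \<le> BB X w w" using p(1) Lf_bil[OF p(2,3), of w w] unfolding psd_def by metis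
qed

lemma BB_ek: "BB X w (ek k) = (\<Sum>i\<in>UNIV. w i * (X$Some i$Some k - xv X i * xv X k))"
  by (simp add: BB_def ek_def sum_distrib_right algebra_simps sum_subtractf if_distrib cong: if_cong)
    (simp add: sum_distrib_left mult_ac)

lemma BB_ekek: "BB X (ek i) (ek k) = X$Some i$Some k - xv X i * xv X k"
proof -
  have e: "(\<lambda>ia. ek i ia * (X $ Some ia $ Some k - xv X ia * xv X k)) =
        (\<lambda>ia. if ia = i then (X $ Some ia $ Some k - xv X ia * xv X k) else 0)"
    by (auto simp: ek_def)
  show ?thesis using BB_ek[of X "ek i" k] unfolding e by simp
qed

definition mm :: "'v::finite M \<Rightarrow> 'v \<Rightarrow> real" where "mm X k = BB X (ek k) (ek k)"
definition sg :: "'v::finite M \<Rightarrow> 'v \<Rightarrow> real" where "sg X k = sqrt (mm X k)"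
definition gg :: "'v::finite M \<Rightarrow> 'v \<Rightarrow> 'v \<Rightarrow> real" where
  "gg X k i = (X$Some i$Some k - xv X i * xv X k) / sg X k"
definition hh :: "'v::finite M \<Rightarrow> 'v \<Rightarrow> 'v \<Rightarrow> real" where
  "hh X k i = (if xv X i = 0 then 0 else gg X k i / xv X i)"
definition mu :: "'v::finite M \<Rightarrow> 'v \<Rightarrow> real \<Rightarrow> real \<Rightarrow> 'v \<Rightarrow> real" where
  "mu X k c s i = c + s * hh X k i"

definition Ycs :: "'v::finite M \<Rightarrow> 'v \<Rightarrow> real \<Rightarrow> real \<Rightarrow> 'v M" where
  "Ycs X k c s = (\<chi> a b. case a of
      None \<Rightarrow> (case b of None \<Rightarrow> 1 | Some j \<Rightarrow> mu X k c s j * (c * xv X j + s * gg X k j))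
    | Some i \<Rightarrow> (case b of None \<Rightarrow> mu X k c s i * (c * xv X i + s * gg X k i)
                  | Some j \<Rightarrow> mu X k c s i * mu X k c s j * X$Some i$Some j))"

definition DD :: "'v::finite M \<Rightarrow> 'v \<Rightarrow> 'v M" where
  "DD X k = (\<chi> a b. case a of
      None \<Rightarrow> (case b of None \<Rightarrow> 0 | Some j \<Rightarrow> 2 * gg X k j)
    | Some i \<Rightarrow> (case b of None \<Rightarrow> 2 * gg X k i
                  | Some j \<Rightarrow> (hh X k i + hh X k j) * X$Some i$Some j))"

definition FF :: "'v::finite M \<Rightarrow> 'v \<Rightarrow> 'v M" where
  "FF X k = (\<chi> a b. case a of
      None \<Rightarrow> (case b of None \<Rightarrow> 0 | Some j \<Rightarrow> hh X k j * gg X k j - xv X j)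
    | Some i \<Rightarrow> (case b of None \<Rightarrow> hh X k i * gg X k i - xv X i
                  | Some j \<Rightarrow> (hh X k i * hh X k j - 1) * X$Some i$Some j))"

lemma base_facts:
  assumes "base X"
  shows "transpose X = X" "X$None$None = 1" "X$Some i$Some i = xv X i" "X$Some i$None = xv X i"
    "X$None$Some i = xv X i" "psd X"
  using assms symD[of X "Some i" None] by (auto simp: base_def psd_def xv_def)

context
  fixes X :: "'v::finite M" and k :: 'v
  assumes bX: "base X" and mpos: "mm X k > 0"
begin

lemma sg_pos: "sg X k > 0" and sg_sq: "(sg X k)\<^sup>2 = mm X k"
  using mpos by (auto simp: sg_def)

lemma gg_bound: "(\<Sum>i\<in>UNIV. w i * gg X k i)\<^sup>2 \<le> BB X w w"
proof -
  have e: "BB X w (ek k) = sg X k * (\<Sum>i\<in>UNIV. w i * gg X k i)"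
    using sg_pos by (simp add: BB_ek gg_def sum_distrib_left)
  have "(BB X w (ek k))\<^sup>2 \<le> BB X w w * mm X k" using BB_cs(1)[OF bX] by (simp add: mm_def)
  then have "(sg X k)\<^sup>2 * (\<Sum>i\<in>UNIV. w i * gg X k i)\<^sup>2 \<le> (sg X k)\<^sup>2 * BB X w w"
    by (simp add: e power_mult_distrib sg_sq mult.commute)
  then show ?thesis using sg_pos by simp
qed

lemma gg_zero: assumes "xv X i = 0" shows "gg X k i = 0"
proof -
  have "BB X (ek i) (ek i) = 0" using base_facts(3)[OF bX, of i] assms by (simp add: BB_ekek)
  then have "(BB X (ek i) (ek k))\<^sup>2 \<le> 0" using BB_cs(1)[OF bX, of "ek i" "ek k"] by simp
  then have "BB X (ek i) (ek k) = 0" by simp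
  then show ?thesis by (simp add: BB_ekek gg_def)
qed

lemma gh: "gg X k i = hh X k i * xv X i"
  using gg_zero by (auto simp: hh_def)

lemma gg_k: "gg X k k = sg X k"
proof -
  have "X$Some k$Some k - xv X k * xv X k = mm X k" by (simp add: mm_def BB_ekek)
  moreover have "mm X k / sg X k = sg X k" using sg_pos sg_sq by (simp add: power2_eq_square field_simps)
  ultimately show ?thesis by (simp add: gg_def)
qed

lemma Ycs_decomp:
  assumes "c\<^sup>2 + s\<^sup>2 = 1"
  shows "Ycs X k c s = X + (s*c) *\<^sub>R DD X k + s\<^sup>2 *\<^sub>R FF X k"
proof -
  have cc: "c * c = 1 - s * s" using assms by (simp add: power2_eq_square)
  have cc2: "c * (c * t) + s * (s * t) = t" for t
  proof -
    have "c * (c * t) + s * (s * t) = (c * c + s * s) * t" by (simp add: algebra_simps)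
    then show ?thesis using cc by simp
  qed
  have "Ycs X k c s $ a $ b = X $ a $ b + (s * c) * DD X k $ a $ b + s\<^sup>2 * FF X k $ a $ b" for a b
  proof (cases a; cases b)
    assume "a = None" "b = None" then show ?thesis
      using base_facts[OF bX] by (simp add: Ycs_def DD_def FF_def)
  next
    fix j assume "a = None" "b = Some j" then show ?thesis
      using base_facts[OF bX] gh[of j]
      by (simp add: Ycs_def DD_def FF_def mu_def algebra_simps power2_eq_square cc2)
  next
    fix i assume "a = Some i" "b = None" then show ?thesis
      using base_facts[OF bX] gh[of i]
      by (simp add: Ycs_def DD_def FF_def mu_def algebra_simps power2_eq_square cc2)
  next
    fix i j assume "a = Some i" "b = Some j" then show ?thesis
      by (simp add: Ycs_def DD_def FF_def mu_def algebra_simps power2_eq_square cc2)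
  qed
  then show ?thesis by (simp add: vec_eq_iff)
qed

lemma Ycs_sym: "transpose (Ycs X k c s) = Ycs X k c s"
  using symD[OF base_facts(1)[OF bX]]
  by (auto simp: vec_eq_iff transpose_def Ycs_def split: option.split)

lemma Ycs_psd:
  assumes "c\<^sup>2 + s\<^sup>2 = 1"
  shows "psd (Ycs X k c s)"
proof -
  have "0 \<le> z \<bullet> (Ycs X k c s *v z)" for z
  proof -
    define w where "w i = mu X k c s i * z $ Some i" for i
    define a where "a = (\<Sum>i\<in>UNIV. xv X i * w i)"
    define b where "b = (\<Sum>i\<in>UNIV. w i * gg X k i)"
    define z0 where "z0 = z $ None"
    have t2: "(\<Sum>j\<in>UNIV. z0 * Ycs X k c s $ None $ Some j * z $ Some j) = z0 * (c*a + s*b)"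
      by (simp add: Ycs_def a_def b_def w_def sum_distrib_left sum.distrib algebra_simps)
    have t3: "(\<Sum>i\<in>UNIV. z $ Some i * Ycs X k c s $ Some i $ None * z0) = z0 * (c*a + s*b)"
      by (simp add: Ycs_def a_def b_def w_def sum_distrib_left sum.distrib algebra_simps)
    have t4: "(\<Sum>i\<in>UNIV. \<Sum>j\<in>UNIV. z $ Some i * Ycs X k c s $ Some i $ Some j * z $ Some j)
        = BB X w w + a * a"
      by (simp add: Ycs_def BB_def a_def w_def algebra_simps)
    have val: "z \<bullet> (Ycs X k c s *v z) = z0 * z0 + 2 * z0 * (c*a + s*b) + (BB X w w + a * a)"
      unfolding bil_split z0_def[symmetric] t2 t3 t4 by (simp add: Ycs_def)
    have bb: "b\<^sup>2 \<le> BB X w w" using gg_bound[of w] by (simp add: b_def)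
    have sq: "(z0 * c + a)\<^sup>2 + (z0 * s + b)\<^sup>2 = z0 * z0 * (c\<^sup>2 + s\<^sup>2) + 2 * z0 * (c*a + s*b) + a*a + b\<^sup>2"
      by (simp add: power2_eq_square algebra_simps)
    have "0 \<le> (z0 * c + a)\<^sup>2 + (z0 * s + b)\<^sup>2" by simp
    then show ?thesis using val bb sq assms by simp
  qed
  then show ?thesis using Ycs_sym by (simp add: psd_def)
qed

lemma Ycs_base:
  assumes "c\<^sup>2 + s\<^sup>2 = 1"
  shows "base (Ycs X k c s)"
  using Ycs_psd[OF assms] gh
  by (simp add: base_def Ycs_def mu_def algebra_simps power2_eq_square base_facts[OF bX])

end

lemma sqrt_ge: assumes "\<bar>s\<bar> \<le> 1" shows "1 - \<bar>s\<bar> \<le> sqrt (1 - s\<^sup>2)"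
proof (rule real_le_rsqrt)
  have t: "\<bar>s\<bar> * \<bar>s\<bar> \<le> \<bar>s\<bar>" using assms by (intro mult_left_le_one_le) auto
  have e1: "s\<^sup>2 = \<bar>s\<bar> * \<bar>s\<bar>" by (simp add: power2_eq_square)
  have e2: "(1 - \<bar>s\<bar>)\<^sup>2 = 1 - 2 * \<bar>s\<bar> + \<bar>s\<bar> * \<bar>s\<bar>" by (simp add: power2_eq_square algebra_simps)
  show "(1 - \<bar>s\<bar>)\<^sup>2 \<le> 1 - s\<^sup>2" unfolding e1 e2 using t by linarith
qed

lemma eps_arg:
  fixes \<delta> K e0 :: real
  assumes e0: "e0 > 0"
    and H: "\<And>s. \<bar>s\<bar> \<le> e0 \<Longrightarrow> s * sqrt (1 - s\<^sup>2) * \<delta> + s\<^sup>2 * K \<le> 0"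
  shows "\<delta> = 0"
proof (rule ccontr)
  assume dn: "\<delta> \<noteq> 0"
  define e where "e = min e0 (min (1/2) (\<bar>\<delta>\<bar> / (4 * (\<bar>K\<bar> + 1))))"
  have ep: "e > 0" using e0 dn by (simp add: e_def)
  have e1: "e \<le> 1/2" "e \<le> e0" "e \<le> \<bar>\<delta>\<bar> / (4 * (\<bar>K\<bar> + 1))" unfolding e_def
    by (meson min.cobounded1 min.cobounded2 order.trans)+
  define s where "s = (if \<delta> > 0 then e else - e)"
  have as: "\<bar>s\<bar> = e" using ep by (simp add: s_def)
  have sd: "s * \<delta> = e * \<bar>\<delta>\<bar>" using dn by (auto simp: s_def)
  define c where "c = sqrt (1 - s\<^sup>2)"
  have cge: "c \<ge> 1/2" using sqrt_ge[of s] as e1 by (simp add: c_def)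
  have "s * c * \<delta> + s\<^sup>2 * K \<le> 0" using H[of s] as e1 by (simp add: c_def)
  moreover have "s * c * \<delta> = c * (e * \<bar>\<delta>\<bar>)" using sd by (simp add: mult_ac)
  moreover have "c * (e * \<bar>\<delta>\<bar>) \<ge> (1/2) * (e * \<bar>\<delta>\<bar>)"
    using cge ep dn by (intro mult_right_mono) auto
  moreover have "s\<^sup>2 * K \<ge> - (e * (e * \<bar>K\<bar>))"
  proof -
    have "s\<^sup>2 = e * e" using as by (metis power2_abs power2_eq_square)
    moreover have "(e * e) * (- \<bar>K\<bar>) \<le> (e * e) * K" by (rule mult_left_mono) auto
    ultimately show ?thesis by simp
  qed
  moreover have "e * \<bar>K\<bar> \<le> \<bar>\<delta>\<bar> / 4"
  proof -
    have "e * \<bar>K\<bar> \<le> \<bar>\<delta>\<bar> / (4 * (\<bar>K\<bar> + 1)) * \<bar>K\<bar>" by (rule mult_right_mono[OF e1(3)]) simp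
    also have "\<dots> \<le> \<bar>\<delta>\<bar> / 4" by (simp add: field_simps)
    finally show ?thesis .
  qed
  moreover have "e * (e * \<bar>K\<bar>) \<le> e * (\<bar>\<delta>\<bar> / 4)" using calculation(5) ep by (simp add: mult_left_mono)
  ultimately have "(1/2) * (e * \<bar>\<delta>\<bar>) - e * (\<bar>\<delta>\<bar> / 4) \<le> 0" by linarith
  moreover have "(1/2) * (e * \<bar>\<delta>\<bar>) - e * (\<bar>\<delta>\<bar> / 4) = e * \<bar>\<delta>\<bar> / 4" by (simp add: field_simps)
  moreover have "e * \<bar>\<delta>\<bar> > 0" using ep dn by simp
  ultimately show False by linarith
qed

lemma subspace_sym: "subspace (sym_mats :: (real^'w^'w) set)"
  unfolding subspace_def sym_mats_def by (auto simp: vec_eq_iff transpose_def)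

lemma dim_lt:
  fixes D :: "real^'w^'w"
  assumes D: "D \<in> sym_mats" "D \<noteq> 0" and N: "N \<subseteq> sym_mats" "\<forall>c\<in>N. c \<bullet> D = 0"
  shows "dim N < dim (sym_mats :: (real^'w^'w) set)"
proof -
  define U where "U = {c \<in> (sym_mats :: (real^'w^'w) set). c \<bullet> D = 0}"
  have sU: "subspace U" using subspace_sym unfolding U_def subspace_def
    by (auto simp: inner_add_left)
  have "span U \<subset> span sym_mats"
  proof (rule psubsetI)
    have "span U = U" using sU by (simp add: span_eq_iff)
    moreover have ss: "span sym_mats = (sym_mats :: (real^'w^'w) set)" using subspace_sym by (simp add: span_eq_iff)
    moreover have "D \<notin> U" using D by (simp add: U_def)
    moreover have "U \<subseteq> sym_mats" by (auto simp: U_def)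
    ultimately show "span U \<subseteq> span sym_mats" "span U \<noteq> span sym_mats" using D
      by (metis span_mono) (metis \<open>span U = U\<close> ss \<open>D \<notin> U\<close> D(1))
  qed
  then have "dim U < dim (sym_mats :: (real^'w^'w) set)" by (rule dim_psubset)
  moreover have "dim N \<le> dim U" using N by (intro dim_subset) (auto simp: U_def)
  ultimately show ?thesis by simp
qed

lemma C_base:
  assumes "C \<in> {TH_hat E, TH_hat' E, TH_hat_plus E}" "Y \<in> C"
  shows "base Y"
  using assms by (auto simp: base_def TH_hat_def TH_hat'_def TH_hat_plus_def)

lemma Ycs_in:
  assumes C: "C \<in> {TH_hat E, TH_hat' E, TH_hat_plus E}" and XC: "X \<in> C" and mpos: "mm X k > 0"
    and cs: "c\<^sup>2 + s\<^sup>2 = 1" and mup: "\<forall>i. mu X k c s i > 0"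
  shows "Ycs X k c s \<in> C"
proof -
  have bX: "base X" using C_base[OF C XC] .
  have bY: "base (Ycs X k c s)" using Ycs_base[OF bX mpos cs] .
  have ent: "Ycs X k c s $ Some i $ Some j = mu X k c s i * mu X k c s j * X $ Some i $ Some j" for i j
    by (simp add: Ycs_def)
  have pp: "mu X k c s i * mu X k c s j > 0" for i j using mup by simp
  have bY': "psd (Ycs X k c s)" "Ycs X k c s $ None $ None = 1"
    "\<forall>i. Ycs X k c s $ Some i $ Some i = Ycs X k c s $ None $ Some i" using bY by (auto simp: base_def)
  consider "C = TH_hat E" | "C = TH_hat' E" | "C = TH_hat_plus E" using C by blast
  then show ?thesis
  proof cases
    case 1
    then show ?thesis using XC bY' ent by (simp add: TH_hat_def)
  next
    case 2
    have "0 \<le> mu X k c s i * mu X k c s j * X $ Some i $ Some j" if "0 \<le> X $ Some i $ Some j" for i j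
      using mult_nonneg_nonneg[OF less_imp_le[OF pp[of i j]] that] by simp
    then show ?thesis using 2 XC bY' ent by (simp add: TH_hat_def TH_hat'_def)
  next
    case 3
    have "mu X k c s i * mu X k c s j * X $ Some i $ Some j \<le> 0" if "X $ Some i $ Some j \<le> 0" for i j
      using mult_nonneg_nonpos[OF less_imp_le[OF pp[of i j]] that] by simp
    then show ?thesis using 3 XC bY' ent by (simp add: TH_hat_plus_def)
  qed
qed

lemma not_vertex:
  fixes X :: "'v::finite M"
  assumes C: "C \<in> {TH_hat E, TH_hat' E, TH_hat_plus E}" and XC: "X \<in> C" and mpos: "mm X k > 0"
  shows "\<not> is_vertex C X"
proof
  assume vx: "is_vertex C X"
  have bX: "base X" using C_base[OF C XC] .
  define H where "H = (\<Sum>i\<in>UNIV. \<bar>hh X k i\<bar>)"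
  have H0: "H \<ge> 0" by (simp add: H_def sum_nonneg)
  have hH: "\<bar>hh X k i\<bar> \<le> H" for i unfolding H_def by (rule member_le_sum) auto
  define e0 where "e0 = min (1/2) (1 / (2 * (H + 1)))"
  have e0p: "e0 > 0" using H0 by (simp add: e0_def)
  have key: "c \<bullet> DD X k = 0" if cN: "c \<in> normal_cone C X" for c
  proof (rule eps_arg[OF e0p])
    fix s :: real assume sa: "\<bar>s\<bar> \<le> e0"
    define cc where "cc = sqrt (1 - s\<^sup>2)"
    have s1: "\<bar>s\<bar> \<le> 1/2" using sa by (simp add: e0_def)
    have s2: "\<bar>s\<bar> * (H + 1) \<le> 1/2" using sa H0 by (simp add: e0_def field_simps)
    have sq1: "s\<^sup>2 \<le> 1" using s1 by (simp add: abs_square_le_1)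
    have cs: "cc\<^sup>2 + s\<^sup>2 = 1" using sq1 by (simp add: cc_def)
    have cge: "cc \<ge> 1 - \<bar>s\<bar>" using sqrt_ge[of s] s1 by (simp add: cc_def)
    have mup: "\<forall>i. mu X k cc s i > 0"
    proof
      fix i
      have "\<bar>s * hh X k i\<bar> \<le> \<bar>s\<bar> * H" using hH[of i] by (simp add: abs_mult mult_left_mono)
      then have "s * hh X k i \<ge> - (\<bar>s\<bar> * H)" by linarith
      then show "mu X k cc s i > 0" using cge s2 by (simp add: mu_def algebra_simps)
    qed
    have YC: "Ycs X k cc s \<in> C" using Ycs_in[OF C XC mpos cs mup] .
    have "c \<bullet> Ycs X k cc s \<le> c \<bullet> X" using cN YC by (simp add: normal_cone_def)
    moreover have "c \<bullet> Ycs X k cc s = c \<bullet> X + (s * cc) * (c \<bullet> DD X k) + s\<^sup>2 * (c \<bullet> FF X k)"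
      using Ycs_decomp[OF bX mpos cs] by (simp add: inner_add_right)
    ultimately show "s * sqrt (1 - s\<^sup>2) * (c \<bullet> DD X k) + s\<^sup>2 * (c \<bullet> FF X k) \<le> 0"
      by (simp add: cc_def)
  qed
  have Dsym: "DD X k \<in> sym_mats"
    by (auto simp: sym_mats_def vec_eq_iff transpose_def DD_def symD[OF base_facts(1)[OF bX]] split: option.split)
  have Dnz: "DD X k \<noteq> 0"
  proof
    assume "DD X k = 0"
    then have "DD X k $ None $ Some k = 0" by simp
    then show False using gg_k[OF bX mpos] sg_pos[OF bX mpos] by (simp add: DD_def)
  qed
  have k2: "\<forall>c\<in>normal_cone C X. c \<bullet> DD X k = 0" using key by blast
  have ns: "normal_cone C X \<subseteq> sym_mats" by (auto simp: normal_cone_def)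
  have "dim (normal_cone C X) < dim (sym_mats :: ('v::finite) M set)"
    by (rule dim_lt[OF Dsym Dnz ns k2])
  then show False using vx by (simp add: is_vertex_def)
qed

lemma outer_form:
  fixes X :: "'v::finite M"
  assumes bX: "base X" and m0: "\<forall>k. mm X k = 0"
  shows "X = outer (one_chi {i. xv X i = 1})" "\<forall>i. xv X i = 0 \<or> xv X i = 1"
proof -
  have xsq: "xv X i * xv X i = xv X i" for i
    using m0 base_facts(3)[OF bX, of i] by (simp add: mm_def BB_ekek)
  show x01: "\<forall>i. xv X i = 0 \<or> xv X i = 1"
  proof
    fix i
    have "xv X i * (xv X i - 1) = 0" using xsq[of i] by (simp add: algebra_simps)
    then show "xv X i = 0 \<or> xv X i = 1" by simp
  qed
  have prod: "X $ Some i $ Some j = xv X i * xv X j" for i j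
  proof -
    have "(BB X (ek i) (ek j))\<^sup>2 \<le> 0" using BB_cs(1)[OF bX, of "ek i" "ek j"] m0 by (simp add: mm_def)
    then show ?thesis by (simp add: BB_ekek)
  qed
  have ch: "(if xv X i = 1 then 1 else 0) = xv X i" for i using x01 by auto
  show "X = outer (one_chi {i. xv X i = 1})"
    unfolding vec_eq_iff
  proof (intro allI)
    fix a b
    show "X $ a $ b = outer (one_chi {i. xv X i = 1}) $ a $ b"
      by (cases a; cases b) (simp_all add: outer_def one_chi_def ch prod base_facts[OF bX])
  qed
qed

lemma outer_psd: "psd (outer (u :: real^'w))"
proof -
  have "transpose (outer u) = outer u" by (simp add: vec_eq_iff transpose_def outer_def mult.commute)
  moreover have "z \<bullet> (outer u *v z) = (u \<bullet> z)\<^sup>2" for z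
    unfolding bil by (simp add: outer_def inner_vec_def power2_eq_square sum_product mult_ac)
  ultimately show ?thesis by (simp add: psd_def)
qed

lemma one_chi_None: "one_chi S $ None = 1" and one_chi_Some: "one_chi S $ Some i = (if i \<in> S then 1 else 0)"
  by (simp_all add: one_chi_def)

lemma outer_in:
  assumes C: "C \<in> {TH_hat E, TH_hat' E, TH_hat_plus E}" and st: "stable_set E S"
  shows "outer (one_chi S) \<in> C"
proof -
  have e: "outer (one_chi S) $ a $ b = one_chi S $ a * one_chi S $ b" for a b by (simp add: outer_def)
  have edge: "(i, j) \<in> E \<Longrightarrow> outer (one_chi S) $ Some i $ Some j = 0" for i j
    using st by (auto simp: e one_chi_Some stable_set_def)
  have nn: "0 \<le> outer (one_chi S) $ Some i $ Some j" for i j by (simp add: e one_chi_Some)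
  have bs: "psd (outer (one_chi S))" "outer (one_chi S) $ None $ None = 1"
    "\<forall>i. outer (one_chi S) $ Some i $ Some i = outer (one_chi S) $ None $ Some i"
    by (simp_all add: outer_psd e one_chi_None one_chi_Some)
  show ?thesis using C bs edge nn by (auto simp: TH_hat_def TH_hat'_def TH_hat_plus_def)
qed

lemma stable_of:
  assumes C: "C \<in> {TH_hat E, TH_hat' E, TH_hat_plus E}" and XC: "outer (one_chi S) \<in> C"
  shows "stable_set E S"
  unfolding stable_set_def
proof (intro ballI notI)
  fix i j assume "i \<in> S" "j \<in> S" "(i, j) \<in> E"
  then have "outer (one_chi S) $ Some i $ Some j = 1" by (simp add: outer_def one_chi_Some)
  moreover have "outer (one_chi S) $ Some i $ Some j \<le> 0"
    using C XC \<open>(i, j) \<in> E\<close> by (auto simp: TH_hat_def TH_hat'_def TH_hat_plus_def)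
  ultimately show False by simp
qed

definition unitm :: "'w \<Rightarrow> 'w \<Rightarrow> real^'w^'w" where
  "unitm a b = (\<chi> p q. if p = a \<and> q = b then 1 else 0)"
definition Sm :: "'w \<Rightarrow> 'w \<Rightarrow> real^'w^'w" where "Sm a b = unitm a b + unitm b a"

lemma sum_delta2:
  "(\<Sum>x\<in>(UNIV::'w::finite set). \<Sum>y\<in>(UNIV::'w set). if x = a then (if y = b then c else 0) else 0) = (c::real)"
proof -
  have "(\<lambda>x. \<Sum>y\<in>(UNIV::'w set). if x = a then (if y = b then c else 0) else 0) = (\<lambda>x. if x = a then c else 0)"
    by (auto simp: fun_eq_iff)
  then show ?thesis unfolding \<open>_ = _\<close> by simp
qed

lemma inner_unitm: "unitm a b \<bullet> (Y :: real^'w^'w) = Y $ a $ b"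
proof -
  have "\<And>p q. unitm a b $ p $ q * Y $ p $ q = (if p = a then (if q = b then Y $ a $ b else 0) else 0)"
    by (simp add: unitm_def)
  then show ?thesis unfolding inner_mat by (simp only: sum_delta2)
qed

lemma outer_inner: "outer w \<bullet> (Y :: real^'w^'w) = w \<bullet> (Y *v w)"
  unfolding bil inner_mat by (simp add: outer_def mult_ac)

lemma outer_qf: "z \<bullet> (outer u *v z) = (u \<bullet> z)\<^sup>2" for u :: "real^'w"
  unfolding bil by (simp add: outer_def inner_vec_def power2_eq_square sum_product mult_ac)

lemma in_N: "c \<in> sym_mats \<Longrightarrow> (\<forall>Y\<in>C. c \<bullet> Y \<le> c \<bullet> X) \<Longrightarrow> c \<in> normal_cone C X"
  by (simp add: normal_cone_def)

definition uu :: "'v::finite set \<Rightarrow> 'v \<Rightarrow> real^('v option)" where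
  "uu S i = (\<chi> a. case a of None \<Rightarrow> -(if i \<in> S then 1 else 0) | Some p \<Rightarrow> if p = i then 1 else 0)"

definition Kmat :: "'v::finite \<Rightarrow> real^('v option)^('v option)" where
  "Kmat i = unitm (Some i) (Some i) - (1/2) *\<^sub>R Sm None (Some i)"

lemma opt_mat_eqI:
  fixes M1 M2 :: "'v::finite M"
  assumes "M1 $ None $ None = M2 $ None $ None" "\<And>j. M1 $ None $ Some j = M2 $ None $ Some j"
    "\<And>i. M1 $ Some i $ None = M2 $ Some i $ None" "\<And>i j. M1 $ Some i $ Some j = M2 $ Some i $ Some j"
  shows "M1 = M2"
  unfolding vec_eq_iff
proof (intro allI)
  fix a b show "M1 $ a $ b = M2 $ a $ b" using assms by (cases a; cases b) auto
qed

lemma sym_decomp: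
  fixes A :: "real^'w^'w"
  assumes "A \<in> sym_mats"
  shows "A = (\<Sum>a\<in>UNIV. \<Sum>b\<in>UNIV. (A $ a $ b / 2) *\<^sub>R Sm a b)"
proof -
  have s: "A $ a $ b = A $ b $ a" for a b using assms symD by (auto simp: sym_mats_def)
  have "(\<Sum>a\<in>UNIV. \<Sum>b\<in>UNIV. (A $ a $ b / 2) *\<^sub>R Sm a b) $ p $ q = A $ p $ q" for p q
  proof -
    have "\<And>a b. ((A $ a $ b / 2) *\<^sub>R Sm a b) $ p $ q =
       (if a = p then (if b = q then A $ p $ q / 2 else 0) else 0) + (if a = q then (if b = p then A $ q $ p / 2 else 0) else 0)"
      by (auto simp: Sm_def unitm_def)
    then have "(\<Sum>a\<in>UNIV. \<Sum>b\<in>UNIV. (A $ a $ b / 2) *\<^sub>R Sm a b) $ p $ q =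
      (\<Sum>a\<in>UNIV. \<Sum>b\<in>UNIV. (if a = p then (if b = q then A $ p $ q / 2 else 0) else 0) + (if a = q then (if b = p then A $ q $ p / 2 else 0) else 0))"
      by (simp only: sum_component)
    also have "\<dots> = A $ p $ q / 2 + A $ q $ p / 2" by (simp only: sum.distrib sum_delta2)
    finally show ?thesis by (simp add: s)
  qed
  then show ?thesis by (simp add: vec_eq_iff)
qed

definition cross :: "real^'w \<Rightarrow> real^'w \<Rightarrow> real^'w^'w" where
  "cross x y = (\<chi> p q. x$p * y$q + y$p * x$q)"

lemma outer_add: "outer (x + y) = outer x + outer y + cross x y"
  by (simp add: vec_eq_iff outer_def cross_def algebra_simps)
lemma cross_diff_left: "cross (x - y) z = cross x z - cross y z"
  by (simp add: vec_eq_iff cross_def algebra_simps)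
lemma cross_diff_right: "cross z (x - y) = cross z x - cross z y"
  by (simp add: vec_eq_iff cross_def algebra_simps)
lemma cross_scale_left: "cross (c *\<^sub>R x) z = c *\<^sub>R cross x z"
  by (simp add: vec_eq_iff cross_def algebra_simps)
lemma cross_scale_right: "cross z (c *\<^sub>R x) = c *\<^sub>R cross z x"
  by (simp add: vec_eq_iff cross_def algebra_simps)
lemma cross_axis: "cross (axis a 1) (axis b 1) = Sm a b"
  by (simp add: vec_eq_iff cross_def Sm_def unitm_def axis_def)
lemma uu_eq: "uu S i = axis (Some i) 1 - (if i \<in> S then 1 else 0) *\<^sub>R axis None 1"
  unfolding vec_eq_iff
proof
  fix a show "uu S i $ a = (axis (Some i) 1 - (if i \<in> S then 1 else 0) *\<^sub>R axis None 1) $ a"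
    by (cases a) (auto simp: uu_def axis_def)
qed

lemma e_ij: "Sm (Some i) (Some j) = (outer (uu S i + uu S j) - outer (uu S i) - outer (uu S j))
     + tj *\<^sub>R Sm (Some i) None + ti *\<^sub>R Sm None (Some j) - (ti * tj) *\<^sub>R Sm None None"
  if "ti = (if i \<in> S then 1 else 0)" "tj = (if j \<in> S then 1 else 0)"
proof -
  have "outer (uu S i + uu S j) - outer (uu S i) - outer (uu S j) = cross (uu S i) (uu S j)"
    by (simp add: outer_add)
  also have "\<dots> = cross (axis (Some i) 1 - ti *\<^sub>R axis None 1) (axis (Some j) 1 - tj *\<^sub>R axis None 1)"
    by (simp add: uu_eq that)
  also have "\<dots> = Sm (Some i) (Some j) - tj *\<^sub>R Sm (Some i) None - ti *\<^sub>R Sm None (Some j) + (ti * tj) *\<^sub>R Sm None None"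
    by (simp add: cross_diff_left cross_diff_right cross_scale_left cross_scale_right cross_axis algebra_simps)
  finally show ?thesis by (simp add: algebra_simps)
qed
context
  fixes C :: "'v::finite M set" and S :: "'v set"
  assumes CB: "\<forall>Y\<in>C. base Y" and XC: "outer (one_chi S) \<in> C"
begin

lemma n1: "unitm None None \<in> normal_cone C (outer (one_chi S))"
proof (rule in_N)
  show "unitm None None \<in> sym_mats" by (auto simp: sym_mats_def unitm_def vec_eq_iff transpose_def)
  show "\<forall>Y\<in>C. unitm None None \<bullet> Y \<le> unitm None None \<bullet> outer (one_chi S)"
    using CB XC by (simp add: inner_unitm base_def)
qed

lemma n2: "Kmat i \<in> normal_cone C (outer (one_chi S))"
proof (rule in_N)
  show "Kmat i \<in> sym_mats"
    by (auto simp: sym_mats_def Kmat_def Sm_def unitm_def vec_eq_iff transpose_def)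
  have z: "Kmat i \<bullet> Y = 0" if "Y \<in> C" for Y
  proof -
    have b: "base Y" using CB that by simp
    have "Y $ Some i $ None = Y $ None $ Some i" using symD[OF base_facts(1)[OF b]] by simp
    then show ?thesis using b
      by (simp add: Kmat_def Sm_def inner_diff_left inner_add_left inner_unitm base_def)
  qed
  show "\<forall>Y\<in>C. Kmat i \<bullet> Y \<le> Kmat i \<bullet> outer (one_chi S)" using z XC by simp
qed

lemma n3:
  assumes "w \<bullet> one_chi S = 0"
  shows "- outer w \<in> normal_cone C (outer (one_chi S))"
proof (rule in_N)
  show "- outer w \<in> sym_mats"
    by (auto simp: sym_mats_def outer_def vec_eq_iff transpose_def mult.commute)
  have "0 \<le> w \<bullet> (Y *v w)" if "Y \<in> C" for Y using CB that by (auto simp: base_def psd_def)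
  moreover have "- outer w \<bullet> outer (one_chi S) = 0"
    using assms by (simp add: outer_inner outer_qf inner_commute)
  ultimately show "\<forall>Y\<in>C. - outer w \<bullet> Y \<le> - outer w \<bullet> outer (one_chi S)"
    by (simp add: outer_inner)
qed

abbreviation "NN \<equiv> normal_cone C (outer (one_chi S))"

lemma uu_orth: "uu S i \<bullet> one_chi S = 0"
proof -
  have "\<And>p. uu S i $ Some p * one_chi S $ Some p = (if p = i then (if i \<in> S then 1 else 0) else 0)"
    by (simp add: uu_def one_chi_def)
  then show ?thesis unfolding inner_vec_def sum_opt by (simp add: uu_def one_chi_def)
qed

lemma outer_span: "w \<bullet> one_chi S = 0 \<Longrightarrow> outer w \<in> span NN"
  using span_neg[OF span_base[OF n3]] by simp

lemma sp_00: "unitm None None \<in> span NN" using n1 by (rule span_base)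

lemma sp_0i: "Sm None (Some i) \<in> span NN"
proof -
  define t where "t = (if i \<in> S then 1 else 0 :: real)"
  have t: "1/2 - t \<noteq> 0" by (simp add: t_def)
  have e: "(1/2 - t) *\<^sub>R Sm None (Some i) = outer (uu S i) - Kmat i - t\<^sup>2 *\<^sub>R unitm None None"
    by (rule opt_mat_eqI) (simp_all add: outer_def uu_def Kmat_def Sm_def unitm_def t_def power2_eq_square algebra_simps)
  have "outer (uu S i) - Kmat i - t\<^sup>2 *\<^sub>R unitm None None \<in> span NN"
    by (intro span_diff span_scale outer_span uu_orth span_base n2 sp_00)
  then have "(1/2 - t) *\<^sub>R Sm None (Some i) \<in> span NN" by (simp add: e)
  then have "(1 / (1/2 - t)) *\<^sub>R ((1/2 - t) *\<^sub>R Sm None (Some i)) \<in> span NN" by (rule span_scale)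
  then show ?thesis using t by simp
qed

lemma sp_ii: "unitm (Some i) (Some i) \<in> span NN"
proof -
  have "unitm (Some i) (Some i) = Kmat i + (1/2) *\<^sub>R Sm None (Some i)" by (simp add: Kmat_def)
  moreover have "Kmat i + (1/2) *\<^sub>R Sm None (Some i) \<in> span NN"
    by (intro span_add span_scale span_base n2 sp_0i)
  ultimately show ?thesis by simp
qed

lemma Sm_comm: "Sm a b = Sm b a" by (simp add: Sm_def add.commute)

lemma sp_ij: "Sm (Some i) (Some j) \<in> span NN"
proof -
  define ti where "ti = (if i \<in> S then 1 else 0 :: real)"
  define tj where "tj = (if j \<in> S then 1 else 0 :: real)"
  have e: "Sm (Some i) (Some j) = (outer (uu S i + uu S j) - outer (uu S i) - outer (uu S j))
     + tj *\<^sub>R Sm (Some i) None + ti *\<^sub>R Sm None (Some j) - (ti * tj) *\<^sub>R Sm None None"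
    by (rule e_ij) (simp_all add: ti_def tj_def)
  have oo: "(uu S i + uu S j) \<bullet> one_chi S = 0" by (simp add: inner_add_left uu_orth)
  have s00: "Sm None None \<in> span NN"
    using span_scale[OF sp_00, of 2] by (simp add: Sm_def scaleR_2)
  have "(outer (uu S i + uu S j) - outer (uu S i) - outer (uu S j))
     + tj *\<^sub>R Sm (Some i) None + ti *\<^sub>R Sm None (Some j) - (ti * tj) *\<^sub>R Sm None None \<in> span NN"
    using sp_0i[of i] sp_0i[of j] s00 outer_span[OF oo] outer_span[OF uu_orth[of i]] outer_span[OF uu_orth[of j]]
    by (simp add: Sm_comm[of "Some i" None] span_add span_diff span_scale)
  then show ?thesis by (simp add: e)
qed

lemma sp_all: "Sm a b \<in> span NN"
proof (cases a; cases b)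
  assume "a = None" "b = None"
  then show ?thesis using span_scale[OF sp_00, of 2] by (simp add: Sm_def scaleR_2)
next
  fix j assume "a = None" "b = Some j" then show ?thesis using sp_0i by simp
next
  fix i assume "a = Some i" "b = None" then show ?thesis using sp_0i Sm_comm by metis
next
  fix i j assume "a = Some i" "b = Some j" then show ?thesis using sp_ij by simp
qed

lemma vertex_outer: "is_vertex C (outer (one_chi S))"
proof -
  have sub: "sym_mats \<subseteq> span NN"
  proof
    fix A :: "'v M" assume "A \<in> sym_mats"
    then have "A = (\<Sum>a\<in>UNIV. \<Sum>b\<in>UNIV. (A $ a $ b / 2) *\<^sub>R Sm a b)" by (rule sym_decomp)
    moreover have "(\<Sum>a\<in>UNIV. \<Sum>b\<in>UNIV. (A $ a $ b / 2) *\<^sub>R Sm a b) \<in> span NN"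
      by (intro span_sum span_scale sp_all)
    ultimately show "A \<in> span NN" by simp
  qed
  have "dim (sym_mats :: 'v M set) \<le> dim NN"
    using dim_subset[OF sub] by simp
  moreover have "dim NN \<le> dim (sym_mats :: 'v M set)" by (rule dim_subset) (auto simp: normal_cone_def)
  ultimately show ?thesis using XC by (simp add: is_vertex_def)
qed

end

lemma row_eq: "row i A = A $ i" by (simp add: row_def vec_eq_iff)

lemma rank_outer:
  fixes u :: "real^'w"
  assumes "u $ a0 \<noteq> 0"
  shows "rank (outer u) = 1"
proof -
  have "rows (outer u) \<subseteq> span {u}"
  proof
    fix r assume "r \<in> rows (outer u)"
    then obtain i where "r = row i (outer u)" by (auto simp: rows_def)
    then have "r = u $ i *\<^sub>R u" by (simp add: row_eq outer_def vec_eq_iff)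
    then show "r \<in> span {u}" by (simp add: span_scale span_base)
  qed
  then have "rank (outer u) \<le> 1" using dim_le_card[of "rows (outer u)" "{u}"] by (simp add: row_rank_def)
  moreover have "outer u \<noteq> 0"
  proof
    assume "outer u = 0"
    then have "outer u $ a0 $ a0 = 0" by simp
    then show False using assms by (simp add: outer_def)
  qed
  then have "rank (outer u) \<noteq> 0" by (simp add: rank_eq_0)
  ultimately show ?thesis by simp
qed

lemma rank_ge2:
  fixes X :: "'v::finite M"
  assumes bX: "base X" and mpos: "mm X k > 0"
  shows "rank X \<noteq> 1"
proof -
  define r0 where "r0 = X $ None"
  define rk where "rk = X $ Some k"
  have r0nz: "r0 \<noteq> 0"
  proof
    assume "r0 = 0" then have "r0 $ None = 0" by simp
    then show False using base_facts(2)[OF bX] by (simp add: r0_def)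
  qed
  have nsp: "rk \<notin> span {r0}"
  proof
    assume "rk \<in> span {r0}"
    then obtain t where t: "rk = t *\<^sub>R r0" by (auto simp: span_singleton)
    then have "rk $ None = t * r0 $ None" "rk $ Some k = t * r0 $ Some k" by simp_all
    then have "xv X k = t" "X $ Some k $ Some k = t * xv X k"
      using base_facts[OF bX] by (simp_all add: rk_def r0_def)
    then have "mm X k = 0" by (simp add: mm_def BB_ekek)
    then show False using mpos by simp
  qed
  have ind: "independent {rk, r0}"
  proof (rule independent_insertI[OF nsp])
    show "independent {r0}" using independent_insertI[of r0 "{}"] r0nz by simp
  qed
  have ne: "rk \<noteq> r0" using nsp span_base[of r0 "{r0}"] by auto
  have "{rk, r0} \<subseteq> rows X" by (auto simp: rows_def row_eq rk_def r0_def)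
  then have "card {rk, r0} \<le> dim (rows X)" using ind by (rule independent_card_le_dim)
  then have "2 \<le> rank X" using ne by (simp add: row_rank_def)
  then show ?thesis by simp
qed

theorem corollary3p2:
  fixes E :: "('v::finite \<times> 'v) set"
    and C :: "(real^('v option)^('v option)) set"
  assumes "sym E" and "\<forall>i. (i, i) \<notin> E"
    and "C \<in> {TH_hat E, TH_hat' E, TH_hat_plus E}"
  shows "(\<forall>X\<in>C. is_vertex C X \<longleftrightarrow> rank X = 1)
       \<and> {X. is_vertex C X} = {outer (one_chi S) | S. stable_set E S}"
proof -
  note Cm = assms(3)
  have CB: "\<forall>Y\<in>C. base Y" using C_base[OF Cm] by blast
  have dich: "(\<exists>S. X = outer (one_chi S) \<and> stable_set E S \<and> is_vertex C X \<and> rank X = 1)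
      \<or> (\<not> is_vertex C X \<and> rank X \<noteq> 1)" if XC: "X \<in> C" for X
  proof (cases "\<forall>k. mm X k = 0")
    case True
    have bX: "base X" using CB XC by blast
    define S where "S = {i. xv X i = 1}"
    have Xe: "X = outer (one_chi S)" using outer_form(1)[OF bX True] by (simp add: S_def)
    have "stable_set E S" using stable_of[OF Cm] XC Xe by simp
    moreover have "is_vertex C X" using vertex_outer[OF CB] XC Xe by simp
    moreover have "rank X = 1" using rank_outer[of "one_chi S" None] Xe by (simp add: one_chi_None)
    ultimately show ?thesis using Xe by blast
  next
    case False
    then obtain k where "mm X k \<noteq> 0" by blast
    moreover have "mm X k \<ge> 0" using BB_cs(2)[OF CB[rule_format, OF XC]] by (simp add: mm_def)
    ultimately have mp: "mm X k > 0" by simp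
    show ?thesis using not_vertex[OF Cm XC mp] rank_ge2[OF CB[rule_format, OF XC] mp] by simp
  qed
  have A: "\<forall>X\<in>C. is_vertex C X \<longleftrightarrow> rank X = 1" using dich by blast
  have B: "{X. is_vertex C X} = {outer (one_chi S) | S. stable_set E S}"
  proof
    show "{X. is_vertex C X} \<subseteq> {outer (one_chi S) | S. stable_set E S}"
    proof
      fix X assume "X \<in> {X. is_vertex C X}"
      then have v: "is_vertex C X" by simp
      then have "X \<in> C" by (simp add: is_vertex_def)
      then show "X \<in> {outer (one_chi S) | S. stable_set E S}" using dich v by blast
    qed
    show "{outer (one_chi S) | S. stable_set E S} \<subseteq> {X. is_vertex C X}"
    proof
      fix X assume "X \<in> {outer (one_chi S) | S. stable_set E S}"
      then obtain S where X: "X = outer (one_chi S)" and st: "stable_set E S" by blast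
      have "outer (one_chi S) \<in> C" using outer_in[OF Cm st] .
      then show "X \<in> {X. is_vertex C X}" using vertex_outer[OF CB] X by simp
    qed
  qed
  show ?thesis using A B by blast
qed

end
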